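(* Let $p$ be an odd prime, $q$ a power of $p$, and $n\ge 0$ an integer. Let $f_n(x)=\sum_{j\ge 0}\binom{n}{2j+1}x^j$. Then in $\mathbb{F}_q[x]$, $$F_n(1,x)=\left(\tfrac12\right)^{n-1}f_n(1-4x).$$ In particular, $F_n(1,x)$ is a permutation polynomial of $\mathbb{F}_q$ if and only if $f_n(x)$ is a permutation polynomial of $\mathbb{F}_q$.
   Context: For an integer $n\ge 1$, the $n$-th reversed Dickson polynomial of the third kind is $F_n(a,x)=\sum_{i=0}^{\lfloor n/2\rfloor}\frac{n-2i}{n-i}\binom{n-i}{i}(-x)^i a^{n-2i}$, where each coefficient $\frac{n-2i}{n-i}\binom{n-i}{i}$ is an integer (read in $\mathbb{F}_q$), and $F_0(a,x)=0$. A polynomial $f\in\mathbb{F}_q[x]$ is a permutation polynomial of $\mathbb{F}_q$ if $c\mapsto f(c)$ is a bijection of $\mathbb{F}_q$. *)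

theory Defs
  imports "HOL-Computational_Algebra.Computational_Algebra"
begin

text \<open>Reversed Dickson polynomial of the third kind F_n(a,x) as a polynomial in x.
  The coefficient (n-2i)/(n-i) * binom(n-i,i) is an integer, computed by exact nat division.\<close>
definition rdickson3 :: "nat \<Rightarrow> 'a::comm_ring_1 \<Rightarrow> 'a poly" where
  "rdickson3 n a = (if n = 0 then 0 else
     (\<Sum>i\<le>n div 2. monom (of_nat (((n - 2*i) * ((n - i) choose i)) div (n - i))
                           * (-1)^i * a^(n - 2*i)) i))"

definition fpoly :: "nat \<Rightarrow> 'a::comm_ring_1 poly" where
  "fpoly n = (\<Sum>j\<le>n. monom (of_nat (n choose (2*j+1))) j)"

definition perm_poly :: "'a::comm_ring_1 poly \<Rightarrow> bool" where
  "perm_poly p \<longleftrightarrow> bij (poly p)"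

end

theory Submission
  imports Defs
begin

lemma cc_eq:
  assumes "n \<ge> 1"
  shows "((n - 2*i) * ((n - i) choose i)) div (n - i) = (n - 1 - i) choose i"
proof (cases "i < n")
  case True
  have "(n - 2*i) * ((n - i) choose i) = ((n - i) - i) * ((n - i) choose i)" by (simp add: mult_2)
  also have "\<dots> = (n - i) * ((n - i - 1) choose i)" by (rule binomial_absorb_comp)
  finally show ?thesis using True by (simp add: diff_commute)
next
  case False
  then have "n - 1 - i = 0" "i \<noteq> 0" using assms by auto
  then show ?thesis using False by simp
qed

lemma coeff_rd:
  "coeff (rdickson3 n (1::'a::comm_ring_1)) i =
     (if n = 0 then 0 else of_nat ((n - 1 - i) choose i) * (-1)^i)"
proof (cases "n = 0")
  case True then show ?thesis by (simp add: rdickson3_def)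
next
  case False
  have "coeff (rdickson3 n (1::'a)) i =
     (\<Sum>j\<le>n div 2. if j = i then of_nat (((n - 2*j) * ((n - j) choose j)) div (n - j)) * (-1)^j else 0)"
    using False by (simp add: rdickson3_def coeff_sum coeff_monom)
  also have "\<dots> = (if i \<le> n div 2 then of_nat (((n - 2*i) * ((n - i) choose i)) div (n - i)) * (-1)^i else 0)"
    by (simp add: sum.delta)
  also have "\<dots> = of_nat ((n - 1 - i) choose i) * (-1)^i"
  proof (cases "i \<le> n div 2")
    case True then show ?thesis using False cc_eq[of n i] by simp
  next
    case F: False
    then have "n - 1 - i < i" by auto
    then show ?thesis using F by (simp add: binomial_eq_0)
  qed
  finally show ?thesis using False by simp
qed

lemma coeff_fpoly: "coeff (fpoly n :: 'a::comm_ring_1 poly) k = of_nat (n choose (2*k+1))"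
proof -
  have "coeff (fpoly n :: 'a poly) k = (\<Sum>j\<le>n. if j = k then of_nat (n choose (2*j+1)) else 0)"
    by (simp add: fpoly_def coeff_sum coeff_monom)
  also have "\<dots> = (if k \<le> n then of_nat (n choose (2*k+1)) else 0)"
    by (simp add: sum.delta)
  also have "\<dots> = of_nat (n choose (2*k+1))" by (simp add: binomial_eq_0)
  finally show ?thesis .
qed

lemma rd_rec:
  "rdickson3 (Suc (Suc n)) (1::'a::comm_ring_1) = rdickson3 (Suc n) 1 - pCons 0 (rdickson3 n 1)"
proof (rule poly_eqI)
  fix i
  show "coeff (rdickson3 (Suc (Suc n)) (1::'a)) i = coeff (rdickson3 (Suc n) 1 - pCons 0 (rdickson3 n 1)) i"
  proof (cases i)
    case 0 then show ?thesis by (simp add: coeff_rd coeff_pCons)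
  next
    case (Suc k)
    show ?thesis
    proof (cases "n = 0")
      case True then show ?thesis using Suc by (simp add: coeff_rd coeff_pCons)
    next
      case False
      then obtain m where m: "n = Suc m" by (cases n) auto
      have pas: "(Suc m - k) choose (Suc k) = ((m - k) choose (Suc k)) + ((m - k) choose k)"
      proof (cases "k \<le> m")
        case True then have "Suc m - k = Suc (m - k)" by simp
        then show ?thesis by simp
      next
        case False then show ?thesis by simp
      qed
      show ?thesis using Suc m
        by (simp add: coeff_rd coeff_pCons pas algebra_simps)
    qed
  qed
qed

lemma binom_id: "(Suc (Suc n) choose (Suc j)) + (n choose (Suc j)) =
   2 * (Suc n choose (Suc j)) + (if j = 0 then 0 else n choose (j - 1))"
proof (cases j)
  case 0 then show ?thesis by simp
next
  case (Suc l)
  have a: "(Suc (Suc n) choose (Suc j)) = (Suc n choose (Suc j)) + (Suc n choose j)" by simp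
  have b: "(Suc n choose (Suc j)) = (n choose (Suc j)) + (n choose j)" by simp
  have c: "(Suc n choose j) = (n choose j) + (n choose l)" using Suc by simp
  show ?thesis using a b c Suc by simp
qed

lemma fpoly_rec:
  "(fpoly (Suc (Suc n)) :: 'a::comm_ring_1 poly) =
     smult 2 (fpoly (Suc n)) - fpoly n + pCons 0 (fpoly n)"
proof (rule poly_eqI)
  fix k
  have e: "of_nat (Suc (Suc n) choose (2*k+1)) + (of_nat (n choose (2*k+1)) :: 'a) =
     2 * of_nat (Suc n choose (2*k+1)) + (if k = 0 then 0 else of_nat (n choose (2*(k - 1)+1)))"
  proof -
    have "(Suc (Suc n) choose (Suc (2*k))) + (n choose (Suc (2*k))) =
      2 * (Suc n choose (Suc (2*k))) + (if 2*k = 0 then 0 else n choose (2*k - 1))"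
      by (rule binom_id)
    moreover have "k \<noteq> 0 \<Longrightarrow> 2*k - 1 = 2*(k-1)+1" by simp
    ultimately have "(Suc (Suc n) choose (2*k+1)) + (n choose (2*k+1)) =
      2 * (Suc n choose (2*k+1)) + (if k = 0 then 0 else n choose (2*(k - 1)+1))"
      by (cases "k = 0") auto
    then have "of_nat ((Suc (Suc n) choose (2*k+1)) + (n choose (2*k+1))) = (of_nat (
      2 * (Suc n choose (2*k+1)) + (if k = 0 then 0 else n choose (2*(k - 1)+1))) :: 'a)"
      by metis
    then show ?thesis by (simp add: of_nat_add of_nat_mult split: if_splits)
  qed
  show "coeff (fpoly (Suc (Suc n)) :: 'a poly) k = coeff (smult 2 (fpoly (Suc n)) - fpoly n + pCons 0 (fpoly n)) k"
    using e by (cases k) (simp_all add: coeff_fpoly coeff_pCons algebra_simps eq_diff_eq)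
qed

lemma comp_rec:
  "pcompose (fpoly (Suc (Suc n))) [:1, -4:] =
     smult 2 (pcompose (fpoly (Suc n)) [:1, -4:]) - smult (4::'a::comm_ring_1) (pCons 0 (pcompose (fpoly n) [:1, -4:]))"
proof -
  let ?r = "[:1, -4:] :: 'a poly"
  have "pcompose (pCons 0 (fpoly n)) ?r = ?r * pcompose (fpoly n) ?r"
    by (simp add: pcompose_pCons)
  also have "?r * pcompose (fpoly n) ?r = pcompose (fpoly n) ?r - smult 4 (pCons 0 (pcompose (fpoly n) ?r))"
    by (simp add: algebra_simps)
  finally show ?thesis
    by (simp add: fpoly_rec pcompose_add pcompose_diff pcompose_smult)
qed

lemma step_lemma:
  fixes h :: "'a::field"
  assumes h2: "2 * h = 1"
  shows "smult (h ^ Suc k) C1 - pCons 0 (smult (h ^ k) C0) =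
         smult (h ^ Suc (Suc k)) (smult 2 C1 - smult 4 (pCons 0 C0))"
proof -
  have a: "h ^ Suc (Suc k) * 2 = h ^ Suc k" using h2 by (simp add: algebra_simps)
  have b: "h ^ Suc (Suc k) * 4 = h ^ k"
  proof -
    have "h ^ Suc (Suc k) * 4 = h ^ k * ((2*h) * (2*h))" by (simp add: algebra_simps)
    then show ?thesis using h2 by simp
  qed
  have c: "smult (h ^ Suc (Suc k)) (smult 4 (pCons 0 C0)) = pCons 0 (smult (h ^ k) C0)"
    unfolding smult_smult b by simp
  show ?thesis
    unfolding smult_diff_right c unfolding smult_smult a ..
qed

lemma main_id:
  fixes h :: "'a::field"
  assumes h2: "2 * h = 1"
  shows "rdickson3 (Suc n) (1::'a) = smult (h ^ n) (pcompose (fpoly (Suc n)) [:1, -4:])"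
proof (induction n rule: nat_less_induct)
  case (1 n)
  show ?case
  proof (cases n)
    case 0
    have "rdickson3 1 (1::'a) = 1" by (rule poly_eqI) (simp add: coeff_rd coeff_1 binomial_eq_0)
    moreover have "(fpoly 1 :: 'a poly) = 1" by (rule poly_eqI) (simp add: coeff_fpoly coeff_1 binomial_eq_0)
    ultimately show ?thesis using 0 by (simp add: pcompose_1)
  next
    case (Suc m)
    show ?thesis
    proof (cases m)
      case 0
      have "rdickson3 (Suc (Suc 0)) (1::'a) = 1" by (rule poly_eqI) (simp add: coeff_rd coeff_1 numeral_2_eq_2 binomial_eq_0)
      moreover have "(fpoly (Suc (Suc 0)) :: 'a poly) = [:2:]"
        by (rule poly_eqI) (simp add: coeff_fpoly coeff_pCons numeral_2_eq_2 split: nat.split)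
      ultimately show ?thesis using Suc 0 h2 by (simp add: mult.commute)
    next
      case (Suc k)
      have IH1: "rdickson3 (Suc m) (1::'a) = smult (h ^ m) (pcompose (fpoly (Suc m)) [:1, -4:])"
        using 1 \<open>n = Suc m\<close> by simp
      have IH0: "rdickson3 (Suc k) (1::'a) = smult (h ^ k) (pcompose (fpoly (Suc k)) [:1, -4:])"
        using 1 \<open>n = Suc m\<close> Suc by simp
      have "rdickson3 (Suc n) (1::'a) = rdickson3 (Suc m) 1 - pCons 0 (rdickson3 (Suc k) 1)"
        using \<open>n = Suc m\<close> Suc by (simp add: rd_rec)
      also have "\<dots> = smult (h ^ n) (pcompose (fpoly (Suc n)) [:1, -4:])"
        unfolding IH1 IH0 using \<open>n = Suc m\<close> Suc
        by (simp only: comp_rec step_lemma[OF h2])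
      finally show ?thesis .
    qed
  qed
qed

lemma bij_affine:
  fixes c e :: "'a::field"
  assumes "c \<noteq> 0"
  shows "bij (\<lambda>y. c * y + e)"
  by (rule bij_betw_byWitness[where f' = "\<lambda>z. (z - e) / c"]) (use assms in \<open>auto simp: field_simps\<close>)

lemma two_ne_zero:
  assumes "odd (CHAR('a::field))"
  shows "(2::'a) \<noteq> 0"
proof
  assume "(2::'a) = 0"
  then have "of_nat 2 = (0::'a)" by simp
  then have "CHAR('a) dvd 2" by (simp only: of_nat_eq_0_iff_char_dvd)
  then have "CHAR('a) \<noteq> 0" by (metis dvd_0_left_iff zero_neq_numeral)
  with \<open>CHAR('a) dvd 2\<close> have "CHAR('a) \<le> 2" by (simp add: dvd_imp_le)
  with assms have "CHAR('a) = 1" by (cases "CHAR('a)"; cases "CHAR('a) - 1") auto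
  then have "of_nat 1 = (0::'a)" by (simp only: of_nat_eq_0_iff_char_dvd) simp
  then show False by simp
qed

theorem proposition3p2:
  fixes n :: nat
  assumes "odd (CHAR('a::{field,finite}))"
  shows "rdickson3 n (1::'a) = smult ((inverse 2) powi (int n - 1)) (pcompose (fpoly n) [:1, -4:])
         \<and> (perm_poly (rdickson3 n (1::'a)) \<longleftrightarrow> perm_poly (fpoly n :: 'a poly))"
proof -
  have t: "(2::'a) \<noteq> 0" using two_ne_zero[OF assms] .
  have h2: "2 * inverse (2::'a) = 1" using t by simp
  define c :: 'a where "c = (inverse 2) powi (int n - 1)"
  have c0: "c \<noteq> 0" using t by (simp add: c_def)
  have eq: "rdickson3 n (1::'a) = smult c (pcompose (fpoly n) [:1, -4:])"
  proof (cases n)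
    case 0
    have "(fpoly 0 :: 'a poly) = 0" by (rule poly_eqI) (simp add: coeff_fpoly)
    then show ?thesis using 0 by (simp add: rdickson3_def)
  next
    case (Suc m)
    have "int n - 1 = int m" using Suc by simp
    then have "c = inverse 2 ^ m" by (simp add: c_def)
    then show ?thesis using main_id[OF h2, of m] Suc by simp
  qed
  have four: "(4::'a) \<noteq> 0"
  proof -
    have "(4::'a) = 2 * 2" by simp
    then show ?thesis using t by (metis mult_eq_0_iff)
  qed
  have p1: "poly (rdickson3 n (1::'a)) = (\<lambda>y. c * y + 0) \<circ> poly (fpoly n) \<circ> (\<lambda>x. (-4) * x + 1)"
    by (rule ext) (simp add: eq poly_pcompose algebra_simps)
  have p2: "poly (fpoly n :: 'a poly) = (\<lambda>y. inverse c * y + 0) \<circ> poly (rdickson3 n (1::'a)) \<circ> (\<lambda>x. (- inverse 4) * x + inverse 4)"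
  proof (rule ext)
    fix x :: 'a
    have "(-4) * ((- inverse 4) * x + inverse 4) + 1 = x" using four by (simp add: field_simps)
    then show "poly (fpoly n) x = ((\<lambda>y. inverse c * y + 0) \<circ> poly (rdickson3 n (1::'a)) \<circ> (\<lambda>x. (- inverse 4) * x + inverse 4)) x"
      using c0 four by (simp add: p1)
  qed
  have "perm_poly (rdickson3 n (1::'a)) \<longleftrightarrow> perm_poly (fpoly n :: 'a poly)"
    unfolding perm_poly_def
  proof
    assume "bij (poly (rdickson3 n (1::'a)))"
    then show "bij (poly (fpoly n :: 'a poly))" unfolding p2
      by (intro bij_comp bij_affine) (use c0 four in auto)
  next
    assume "bij (poly (fpoly n :: 'a poly))"
    then show "bij (poly (rdickson3 n (1::'a)))" unfolding p1
      by (intro bij_comp bij_affine) (use c0 four in auto)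
  qed
  then show ?thesis using eq c_def by simp
qed

end
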